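(* For every $n\in\mathbb{N}$ and every integer $k\ge 3$, there exists a graph $G$ on $kn$ vertices, of pathwidth $2k-1$ and maximum degree $3k-1$, such that $\pi_\alpha(G)\ge (k-2)\log_2(n/3)$.
   Context: A string $s=s_1,\ldots,s_{2k}$ (of even length) is an anagram if $s_1,\ldots,s_k$ is a permutation of $s_{k+1},\ldots,s_{2k}$. For a graph $G$, a colouring $\varphi:V(G)\to\{1,\ldots,c\}$ is anagram-free if for every path $v_1,v_2,\ldots,v_{2m}$ in $G$ with an even number $2m\ge 2$ of vertices (i.e., an odd number of edges), the string $\varphi(v_1),\ldots,\varphi(v_{2m})$ is not an anagram. The anagram-free chromatic number $\pi_\alpha(G)$ is the smallest $c$ such that $G$ has an anagram-free colouring with $c$ colours. *)

theory Defs
  imports Complex_Main "HOL-Library.Multiset"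
begin

definition sgraph :: "'a set \<Rightarrow> ('a \<Rightarrow> 'a \<Rightarrow> bool) \<Rightarrow> bool" where
  "sgraph V E \<longleftrightarrow> finite V \<and>
     (\<forall>u v. E u v \<longrightarrow> u \<in> V \<and> v \<in> V \<and> u \<noteq> v \<and> E v u)"

definition degree :: "('a \<Rightarrow> 'a \<Rightarrow> bool) \<Rightarrow> 'a \<Rightarrow> nat" where
  "degree E v = card {u. E v u}"

definition max_degree :: "'a set \<Rightarrow> ('a \<Rightarrow> 'a \<Rightarrow> bool) \<Rightarrow> nat" where
  "max_degree V E = Max (insert 0 (degree E ` V))"

definition is_path :: "'a set \<Rightarrow> ('a \<Rightarrow> 'a \<Rightarrow> bool) \<Rightarrow> 'a list \<Rightarrow> bool" where
  "is_path V E xs \<longleftrightarrow> xs \<noteq> [] \<and> distinct xs \<and> set xs \<subseteq> V \<and>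
     (\<forall>i. Suc i < length xs \<longrightarrow> E (xs ! i) (xs ! Suc i))"

definition anagram :: "'b list \<Rightarrow> bool" where
  "anagram s \<longleftrightarrow> even (length s) \<and>
     mset (take (length s div 2) s) = mset (drop (length s div 2) s)"

definition anagram_free_colouring ::
  "'a set \<Rightarrow> ('a \<Rightarrow> 'a \<Rightarrow> bool) \<Rightarrow> ('a \<Rightarrow> nat) \<Rightarrow> nat \<Rightarrow> bool" where
  "anagram_free_colouring V E \<phi> c \<longleftrightarrow> \<phi> ` V \<subseteq> {1..c} \<and>
     (\<forall>xs. is_path V E xs \<and> even (length xs) \<and> length xs \<ge> 2 \<longrightarrow> \<not> anagram (map \<phi> xs))"

definition anagram_chromatic_number :: "'a set \<Rightarrow> ('a \<Rightarrow> 'a \<Rightarrow> bool) \<Rightarrow> nat" where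
  "anagram_chromatic_number V E = (LEAST c. \<exists>\<phi>. anagram_free_colouring V E \<phi> c)"

definition path_decomposition :: "'a set \<Rightarrow> ('a \<Rightarrow> 'a \<Rightarrow> bool) \<Rightarrow> 'a set list \<Rightarrow> bool" where
  "path_decomposition V E Bs \<longleftrightarrow>
     (\<forall>B\<in>set Bs. B \<subseteq> V) \<and>
     (\<forall>v\<in>V. \<exists>B\<in>set Bs. v \<in> B) \<and>
     (\<forall>u v. E u v \<longrightarrow> (\<exists>B\<in>set Bs. u \<in> B \<and> v \<in> B)) \<and>
     (\<forall>v i j l. i \<le> j \<and> j \<le> l \<and> l < length Bs \<and> v \<in> Bs ! i \<and> v \<in> Bs ! l \<longrightarrow> v \<in> Bs ! j)"

definition pathwidth :: "'a set \<Rightarrow> ('a \<Rightarrow> 'a \<Rightarrow> bool) \<Rightarrow> nat" where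
  "pathwidth V E = (LEAST w. \<exists>Bs. path_decomposition V E Bs \<and> (\<forall>B\<in>set Bs. card B \<le> w + 1))"

end

theory Submission
  imports Defs
begin

lemma hall:
  assumes "finite I" "\<And>i. i \<in> I \<Longrightarrow> finite (A i)"
    and "\<And>K. K \<subseteq> I \<Longrightarrow> card K \<le> card (\<Union> (A ` K))"
  shows "\<exists>f. inj_on f I \<and> (\<forall>i\<in>I. f i \<in> A i)"
  using assms
proof (induction "card I" arbitrary: I A rule: less_induct)
  case less
  note fin = less.prems(1) and finA = less.prems(2) and hc = less.prems(3)
  show ?case
  proof (cases "I = {}")
    case True then show ?thesis by simp
  next
    case False
    show ?thesis
    proof (cases "\<exists>K. K \<subseteq> I \<and> K \<noteq> {} \<and> K \<noteq> I \<and> card (\<Union>(A`K)) = card K")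
      case True
      then obtain K where K: "K \<subseteq> I" "K \<noteq> {}" "K \<noteq> I" "card (\<Union>(A`K)) = card K" by blast
      have finK: "finite K" using K(1) fin finite_subset by blast
      have cK: "card K < card I" using K(1,3) fin psubset_card_mono by blast
      have hcK: "card K' \<le> card (\<Union> (A ` K'))" if "K' \<subseteq> K" for K'
        using hc that K(1) by blast
      obtain f1 where f1: "inj_on f1 K" "\<forall>i\<in>K. f1 i \<in> A i"
        using less.hyps[OF cK finK, of A] finA hcK K(1) by (meson subsetD)
      define U where "U = \<Union>(A`K)"
      have finU: "finite U" unfolding U_def using finK finA K(1) by blast
      have cI': "card (I - K) < card I"
      proof -
        have "card K > 0" using K(2) finK by (simp add: card_gt_0_iff)
        moreover have "card K \<le> card I" using K(1) fin by (simp add: card_mono)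
        ultimately show ?thesis using card_Diff_subset[OF finK K(1)] by simp
      qed
      have hc': "card K' \<le> card (\<Union>((\<lambda>i. A i - U) ` K'))" if "K' \<subseteq> I - K" for K'
      proof -
        have finK': "finite K'" using that fin finite_subset by blast
        have disj: "K \<inter> K' = {}" using that by blast
        have "card K + card K' = card (K \<union> K')" using finK finK' disj by (simp add: card_Un_disjoint)
        also have "\<dots> \<le> card (\<Union>(A`(K \<union> K')))" using hc that K(1) by blast
        also have "\<Union>(A`(K \<union> K')) = \<Union>((\<lambda>i. A i - U) ` K') \<union> U" unfolding U_def by blast
        also have "card (\<Union>((\<lambda>i. A i - U) ` K') \<union> U) = card (\<Union>((\<lambda>i. A i - U) ` K')) + card U"
        proof (rule card_Un_disjoint)
          show "finite (\<Union>((\<lambda>i. A i - U) ` K'))" using finK' finA that by blast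
        qed (use finU in auto)
        finally show ?thesis using K(4) unfolding U_def by simp
      qed
      obtain f2 where f2: "inj_on f2 (I - K)" "\<forall>i\<in>I - K. f2 i \<in> A i - U"
      proof -
        have "finite (I - K)" using fin by simp
        moreover have "\<And>i. i \<in> I - K \<Longrightarrow> finite (A i - U)" using finA by simp
        ultimately have "\<exists>f. inj_on f (I - K) \<and> (\<forall>i\<in>I - K. f i \<in> A i - U)"
          using less.hyps[OF cI', of "\<lambda>i. A i - U"] hc' by presburger
        then show ?thesis using that by blast
      qed
      define f where "f i = (if i \<in> K then f1 i else f2 i)" for i
      have "inj_on f I"
      proof (rule inj_onI)
        fix x y assume xy: "x \<in> I" "y \<in> I" "f x = f y"
        show "x = y"
        proof (cases "x \<in> K"; cases "y \<in> K")
          assume "x \<in> K" "y \<in> K" then show ?thesis using xy f1(1) unfolding f_def by (auto dest: inj_onD)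
        next
          assume "x \<notin> K" "y \<notin> K" then show ?thesis using xy f2(1) unfolding f_def by (auto dest: inj_onD)
        next
          assume a: "x \<in> K" "y \<notin> K"
          then have "f x \<in> U" using f1 unfolding f_def U_def by auto
          moreover have "f y \<notin> U" using a xy(2) f2(2) unfolding f_def by auto
          ultimately show ?thesis using xy by simp
        next
          assume a: "x \<notin> K" "y \<in> K"
          then have "f y \<in> U" using f1 unfolding f_def U_def by auto
          moreover have "f x \<notin> U" using a xy(1) f2(2) unfolding f_def by auto
          ultimately show ?thesis using xy by simp
        qed
      qed
      moreover have "\<forall>i\<in>I. f i \<in> A i" using f1 f2 unfolding f_def by auto
      ultimately show ?thesis by blast
    next
      case False2: False
      obtain i0 where i0: "i0 \<in> I" using False by blast
      have "1 \<le> card (A i0)" using hc[of "{i0}"] i0 by simp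
      then obtain x where x: "x \<in> A i0" by (metis card.empty ex_in_conv not_one_le_zero)
      have cI': "card (I - {i0}) < card I" using i0 fin by (meson card_Diff1_less)
      have hc': "card K' \<le> card (\<Union>((\<lambda>i. A i - {x}) ` K'))" if "K' \<subseteq> I - {i0}" for K'
      proof (cases "K' = {}")
        case True then show ?thesis by simp
      next
        case ne: False
        have finK': "finite K'" using that fin finite_subset by blast
        have KI: "K' \<subseteq> I" "K' \<noteq> I" using that i0 by auto
        have "card (\<Union>(A`K')) \<noteq> card K'"
        proof
          assume "card (\<Union>(A`K')) = card K'"
          then have "\<exists>K. K \<subseteq> I \<and> K \<noteq> {} \<and> K \<noteq> I \<and> card (\<Union>(A`K)) = card K"
            using KI ne by (intro exI[of _ K']) simp
          then show False using False2 by (rule notE[rotated])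
        qed
        moreover have "card K' \<le> card (\<Union>(A`K'))" using hc KI(1) by simp
        ultimately have gt: "card K' < card (\<Union>(A`K'))" by linarith
        define Bx where "Bx = \<Union>((\<lambda>i. A i - {x}) ` K')"
        have sub: "\<Union>(A`K') \<subseteq> insert x Bx" unfolding Bx_def by blast
        have finB: "finite Bx" unfolding Bx_def using finK' finA KI(1) by auto
        have "card (\<Union>(A`K')) \<le> card (insert x Bx)"
          using card_mono[OF _ sub] finB by simp
        also have "\<dots> \<le> Suc (card Bx)" using finB by (simp add: card_insert_if)
        finally show ?thesis using gt unfolding Bx_def by simp
      qed
      obtain f' where f': "inj_on f' (I - {i0})" "\<forall>i\<in>I - {i0}. f' i \<in> A i - {x}"
      proof -
        have "finite (I - {i0})" using fin by simp
        moreover have "\<And>i. i \<in> I - {i0} \<Longrightarrow> finite (A i - {x})" using finA by simp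
        ultimately have "\<exists>f. inj_on f (I - {i0}) \<and> (\<forall>i\<in>I - {i0}. f i \<in> A i - {x})"
          using less.hyps[OF cI', of "\<lambda>i. A i - {x}"] hc' by presburger
        then show ?thesis using that by blast
      qed
      define f where "f = f'(i0 := x)"
      have "inj_on f I"
      proof (rule inj_onI)
        fix a b assume ab: "a \<in> I" "b \<in> I" "f a = f b"
        show "a = b" using ab f' unfolding f_def
          by (cases "a = i0"; cases "b = i0") (auto dest: inj_onD)
      qed
      moreover have "\<forall>i\<in>I. f i \<in> A i" using f' x unfolding f_def by auto
      ultimately show ?thesis by blast
    qed
  qed
qed


lemma card_split1:
  assumes "finite I" "a \<in> I"
  shows "card {i\<in>I. P i} = card {i\<in>I - {a}. P i} + (if P a then 1 else 0)"
proof -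
  have "{i\<in>I. P i} = (if P a then insert a {i\<in>I - {a}. P i} else {i\<in>I - {a}. P i})"
    using assms(2) by auto
  then show ?thesis using assms(1) by (auto simp: card_insert_if)
qed

definition otl :: "('i \<Rightarrow> bool) \<Rightarrow> ('i \<Rightarrow> 'v) \<Rightarrow> ('i \<Rightarrow> 'v) \<Rightarrow> 'i \<Rightarrow> 'v" where
  "otl ori s t i = (if ori i then s i else t i)"
definition ohd :: "('i \<Rightarrow> bool) \<Rightarrow> ('i \<Rightarrow> 'v) \<Rightarrow> ('i \<Rightarrow> 'v) \<Rightarrow> 'i \<Rightarrow> 'v" where
  "ohd ori s t i = (if ori i then t i else s i)"

lemma euler_orient:
  fixes s t :: "'i \<Rightarrow> 'v"
  assumes "finite I" "\<And>v. even (card {i\<in>I. s i = v} + card {i\<in>I. t i = v})"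
  shows "\<exists>ori. \<forall>v. card {i\<in>I. otl ori s t i = v} = card {i\<in>I. ohd ori s t i = v}"
  using assms
proof (induction "card I" arbitrary: I s t rule: less_induct)
  case less
  note fin = less.prems(1) and ev = less.prems(2)
  show ?case
  proof (cases "I = {}")
    case True then show ?thesis by simp
  next
    case False
    then obtain i0 where i0: "i0 \<in> I" by blast
    define I' where "I' = I - {i0}"
    have finI': "finite I'" using fin unfolding I'_def by simp
    have cI': "card I' < card I" unfolding I'_def using i0 fin by (meson card_Diff1_less)
    have spl: "\<And>P. card {i\<in>I. P i} = card {i\<in>I'. P i} + (if P i0 then 1 else 0)"
      unfolding I'_def using card_split1[OF fin i0] .
    show ?thesis
    proof (cases "s i0 = t i0")
      case True
      have ev': "even (card {i\<in>I'. s i = v} + card {i\<in>I'. t i = v})" for v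
        using ev[of v] spl[of "\<lambda>i. s i = v"] spl[of "\<lambda>i. t i = v"] True by (auto split: if_splits)
      obtain ori where ori: "\<forall>v. card {i\<in>I'. otl ori s t i = v} = card {i\<in>I'. ohd ori s t i = v}"
        using less.hyps[OF cI' finI' ev'] by blast
      have "card {i\<in>I. otl ori s t i = v} = card {i\<in>I. ohd ori s t i = v}" for v
        using ori spl[of "\<lambda>i. otl ori s t i = v"] spl[of "\<lambda>i. ohd ori s t i = v"] True
        by (simp add: otl_def ohd_def)
      then show ?thesis by blast
    next
      case False
      define u where "u = s i0"
      define v0 where "v0 = t i0"
      have "odd (card {i\<in>I'. s i = u} + card {i\<in>I'. t i = u})"
        using ev[of u] spl[of "\<lambda>i. s i = u"] spl[of "\<lambda>i. t i = u"] False
        unfolding u_def v0_def by (auto split: if_splits)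
      then have "{i\<in>I'. s i = u} \<noteq> {} \<or> {i\<in>I'. t i = u} \<noteq> {}"
        by (metis (no_types, lifting) card.empty add_0 even_zero)
      then obtain j where j: "j \<in> I'" "s j = u \<or> t j = u" by blast
      define w where "w = (if s j = u then t j else s j)"
      define s' where "s' = s(j := v0)"
      define t' where "t' = t(j := w)"
      define I'' where "I'' = I' - {j}"
      have spl2: "\<And>P. card {i\<in>I'. P i} = card {i\<in>I''. P i} + (if P j then 1 else 0)"
        unfolding I''_def using card_split1[OF finI' j(1)] .
      have eqs: "\<And>P. card {i\<in>I''. P (s' i)} = card {i\<in>I''. P (s i)}"
                "\<And>P. card {i\<in>I''. P (t' i)} = card {i\<in>I''. P (t i)}"
        unfolding s'_def t'_def I''_def by (auto intro!: arg_cong[where f=card])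
      have ev': "even (card {i\<in>I'. s' i = x} + card {i\<in>I'. t' i = x})" for x
      proof -
        have a: "card {i\<in>I'. s' i = x} = card {i\<in>I''. s i = x} + (if v0 = x then 1 else 0)"
          using spl2[of "\<lambda>i. s' i = x"] eqs(1)[of "\<lambda>y. y = x"] unfolding s'_def by simp
        have b: "card {i\<in>I'. t' i = x} = card {i\<in>I''. t i = x} + (if w = x then 1 else 0)"
          using spl2[of "\<lambda>i. t' i = x"] eqs(2)[of "\<lambda>y. y = x"] unfolding t'_def by simp
        have c: "card {i\<in>I. s i = x} = card {i\<in>I''. s i = x} + (if s j = x then 1 else 0) + (if u = x then 1 else 0)"
          using spl[of "\<lambda>i. s i = x"] spl2[of "\<lambda>i. s i = x"] unfolding u_def by simp
        have d: "card {i\<in>I. t i = x} = card {i\<in>I''. t i = x} + (if t j = x then 1 else 0) + (if v0 = x then 1 else 0)"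
          using spl[of "\<lambda>i. t i = x"] spl2[of "\<lambda>i. t i = x"] unfolding v0_def by simp
        show ?thesis using ev[of x] a b c d j(2) unfolding w_def by (auto split: if_splits)
      qed
      obtain ori' where ori': "\<forall>x. card {i\<in>I'. otl ori' s' t' i = x} = card {i\<in>I'. ohd ori' s' t' i = x}"
        using less.hyps[OF cI' finI' ev'] by blast
      define ori where "ori = ori'(i0 := \<not> ori' j, j := (ori' j = (s j = u)))"
      have ij: "i0 \<noteq> j" using j(1) unfolding I'_def by auto
      have i0I'': "i0 \<notin> I''" "j \<notin> I''" unfolding I''_def I'_def by auto
      have same: "\<And>i. i \<in> I'' \<Longrightarrow> otl ori s t i = otl ori' s' t' i \<and> ohd ori s t i = ohd ori' s' t' i"
        unfolding ori_def otl_def ohd_def s'_def t'_def using i0I'' by auto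
      have eqs2: "\<And>P. card {i\<in>I''. P (otl ori s t i)} = card {i\<in>I''. P (otl ori' s' t' i)}"
                 "\<And>P. card {i\<in>I''. P (ohd ori s t i)} = card {i\<in>I''. P (ohd ori' s' t' i)}"
        using same by (auto intro!: arg_cong[where f=card])
      define T where "T = (if ori' j then v0 else w)"
      define H where "H = (if ori' j then w else v0)"
      have tT: "otl ori' s' t' j = T" "ohd ori' s' t' j = H"
        unfolding otl_def ohd_def T_def H_def s'_def t'_def by auto
      have path: "(if otl ori s t i0 = x then 1 else 0) + (if otl ori s t j = x then 1 else 0)
                  = (if T = x then 1 else 0) + (if u = x then (1::nat) else 0)"
             "(if ohd ori s t i0 = x then 1 else 0) + (if ohd ori s t j = x then 1 else 0)
                  = (if u = x then 1 else 0) + (if H = x then (1::nat) else 0)" for x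
        unfolding otl_def ohd_def T_def H_def ori_def w_def using ij j(2)
        by (auto simp: u_def v0_def)
      have "card {i\<in>I. otl ori s t i = x} = card {i\<in>I. ohd ori s t i = x}" for x
      proof -
        have a: "card {i\<in>I. otl ori s t i = x} = card {i\<in>I''. otl ori' s' t' i = x}
                   + (if T = x then 1 else 0) + (if u = x then 1 else 0)"
          using spl[of "\<lambda>i. otl ori s t i = x"] spl2[of "\<lambda>i. otl ori s t i = x"]
            eqs2(1)[of "\<lambda>y. y = x"] path(1)[of x] by simp
        have b: "card {i\<in>I. ohd ori s t i = x} = card {i\<in>I''. ohd ori' s' t' i = x}
                   + (if u = x then 1 else 0) + (if H = x then 1 else 0)"
          using spl[of "\<lambda>i. ohd ori s t i = x"] spl2[of "\<lambda>i. ohd ori s t i = x"]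
            eqs2(2)[of "\<lambda>y. y = x"] path(2)[of x] by simp
        have c: "card {i\<in>I'. otl ori' s' t' i = x} = card {i\<in>I''. otl ori' s' t' i = x} + (if T = x then 1 else 0)"
          using spl2[of "\<lambda>i. otl ori' s' t' i = x"] tT by simp
        have d: "card {i\<in>I'. ohd ori' s' t' i = x} = card {i\<in>I''. ohd ori' s' t' i = x} + (if H = x then 1 else 0)"
          using spl2[of "\<lambda>i. ohd ori' s' t' i = x"] tT by simp
        show ?thesis using a b c d ori'[rule_format, of x] by simp
      qed
      then show ?thesis by blast
    qed
  qed
qed


definition GV :: "nat \<Rightarrow> nat \<Rightarrow> nat set" where "GV k n = {..<k*n}"
definition GE :: "nat \<Rightarrow> nat \<Rightarrow> nat \<Rightarrow> nat \<Rightarrow> bool" where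
  "GE k n u v \<longleftrightarrow> u < k*n \<and> v < k*n \<and> u \<noteq> v \<and> u div k \<le> Suc (v div k) \<and> v div k \<le> Suc (u div k)"

definition near :: "nat \<Rightarrow> nat \<Rightarrow> nat \<Rightarrow> bool" where
  "near k u v \<longleftrightarrow> u div k \<le> Suc (v div k) \<and> v div k \<le> Suc (u div k)"

lemma succ_const_col:
  assumes "\<forall>v\<in>set xs. v div k = c"
  shows "successively (near k) xs"
  using assms by (induction xs) (auto simp: successively_Cons near_def)

lemma succ_concat:
  assumes "successively (\<lambda>p q. cf p \<le> Suc (cf q) \<and> cf q \<le> Suc (cf p)) ps"
     "\<And>p. p \<in> set ps \<Longrightarrow> g p \<noteq> [] \<and> (\<forall>v\<in>set (g p). v div k = cf p)"
  shows "successively (near k) (concat (map g ps))"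
  using assms
proof (induction ps)
  case Nil then show ?case by simp
next
  case (Cons p ps)
  have gp: "g p \<noteq> []" "\<forall>v\<in>set (g p). v div k = cf p" using Cons.prems(2) by auto
  have s1: "successively (near k) (g p)" using succ_const_col[OF gp(2)] .
  have s2: "successively (near k) (concat (map g ps))"
    using Cons.IH Cons.prems by (auto simp: successively_Cons)
  show ?case
  proof (cases ps)
    case Nil then show ?thesis using s1 by simp
  next
    case (Cons q qs)
    have gq: "g q \<noteq> []" "\<forall>v\<in>set (g q). v div k = cf q" using Cons.prems(2) \<open>ps = q # qs\<close> by auto
    have pq: "cf p \<le> Suc (cf q) \<and> cf q \<le> Suc (cf p)" using Cons.prems(1) \<open>ps = q # qs\<close> by simp
    have hd: "hd (concat (map g ps)) = hd (g q)" using \<open>ps = q # qs\<close> gq(1) by simp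
    have "last (g p) \<in> set (g p)" using gp(1) by simp
    then have l: "last (g p) div k = cf p" using gp(2) by blast
    have "hd (g q) \<in> set (g q)" using gq(1) by simp
    then have h: "hd (g q) div k = cf q" using gq(2) by blast
    have "near k (last (g p)) (hd (concat (map g ps)))" unfolding hd near_def using l h pq by simp
    then show ?thesis using s1 s2 by (simp add: successively_append_iff)
  qed
qed

lemma succ_upt: "successively (\<lambda>p q. p \<le> Suc q \<and> q \<le> Suc p) [a..<b]"
proof (induction b)
  case 0 then show ?case by simp
next
  case (Suc b)
  show ?case
  proof (cases "a \<le> b")
    case True
    then have "[a..<Suc b] = [a..<b] @ [b]" by simp
    moreover have "[a..<b] = [] \<or> last [a..<b] = b - 1" by (cases "a < b") (simp_all add: last_upt)
    ultimately show ?thesis using Suc.IH by (auto simp add: successively_append_iff)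
  next
    case False then show ?thesis by simp
  qed
qed

lemma anagram_from_AB:
  fixes \<phi> :: "nat \<Rightarrow> nat"
  assumes k: "0 < k" and ab: "a < b" "b \<le> n"
    and A: "A \<subseteq> {v. a \<le> v div k \<and> v div k < b}" and B: "B \<subseteq> {v. a \<le> v div k \<and> v div k < b}"
    and disj: "A \<inter> B = {}"
    and ne: "\<And>m. a \<le> m \<Longrightarrow> m < b \<Longrightarrow> (\<exists>v\<in>A. v div k = m) \<and> (\<exists>v\<in>B. v div k = m)"
    and bal: "\<And>x. card {v\<in>A. \<phi> v = x} = card {v\<in>B. \<phi> v = x}"
  shows "\<exists>xs. is_path (GV k n) (GE k n) xs \<and> even (length xs) \<and> 2 \<le> length xs \<and> anagram (map \<phi> xs)"
proof -
  have bnd: "\<And>v. a \<le> v div k \<Longrightarrow> v div k < b \<Longrightarrow> v < k*n"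
  proof -
    fix v assume "v div k < b"
    then have "v div k < n" using ab by simp
    then show "v < k*n" using k by (metis div_less_iff_less_mult mult.commute)
  qed
  have "A \<subseteq> {..<k*n}" using A bnd by auto
  then have finA: "finite A" using finite_subset by blast
  have "B \<subseteq> {..<k*n}" using B bnd by auto
  then have finB: "finite B" using finite_subset by blast
  define g :: "bool \<times> nat \<Rightarrow> nat list" where
    "g p = sorted_list_of_set {v \<in> (if fst p then A else B). v div k = snd p}" for p
  define ps where "ps = map (Pair True) [a..<b] @ map (Pair False) (rev [a..<b])"
  define xsA where "xsA = concat (map g (map (Pair True) [a..<b]))"
  define xsB where "xsB = concat (map g (map (Pair False) (rev [a..<b])))"
  define xs where "xs = xsA @ xsB"
  have xs_ps: "xs = concat (map g ps)" unfolding xs_def xsA_def xsB_def ps_def by simp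
  have gset: "set (g p) = {v \<in> (if fst p then A else B). v div k = snd p}" for p
    unfolding g_def using finA finB by simp
  have gdist: "distinct (g p)" for p unfolding g_def by simp
  have setA: "set xsA = A"
  proof -
    have "set xsA = (\<Union>m\<in>{a..<b}. {v\<in>A. v div k = m})" unfolding xsA_def using gset by auto
    also have "\<dots> = A" using A by auto
    finally show ?thesis .
  qed
  have setB: "set xsB = B"
  proof -
    have "set xsB = (\<Union>m\<in>{a..<b}. {v\<in>B. v div k = m})" unfolding xsB_def using gset by auto
    also have "\<dots> = B" using B by auto
    finally show ?thesis .
  qed
  have gne: "g p \<noteq> []" if "p \<in> set ps" for p
  proof -
    have m: "a \<le> snd p" "snd p < b" using that unfolding ps_def by auto
    have "set (g p) \<noteq> {}" using ne[OF m] unfolding gset by (cases "fst p") auto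
    then show ?thesis by auto
  qed
  have dA: "distinct xsA" unfolding xsA_def
  proof (rule distinct_concat)
    have "inj_on (g \<circ> Pair True) {a..<b}"
    proof (rule inj_onI)
      fix x y assume xy: "x \<in> {a..<b}" "y \<in> {a..<b}" "(g \<circ> Pair True) x = (g \<circ> Pair True) y"
      obtain v where v: "v \<in> A" "v div k = x" using ne[of x] xy(1) by auto
      then have "v \<in> set (g (True, x))" using gset by simp
      then have "v \<in> set (g (True, y))" using xy(3) by simp
      then show "x = y" using gset v by simp
    qed
    then show "distinct (map g (map (Pair True) [a..<b]))" by (simp add: distinct_map)
  next
    show "\<And>ys. ys \<in> set (map g (map (Pair True) [a..<b])) \<Longrightarrow> distinct ys" using gdist by auto
  next
    show "\<And>ys zs. ys \<in> set (map g (map (Pair True) [a..<b])) \<Longrightarrow> zs \<in> set (map g (map (Pair True) [a..<b]))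
            \<Longrightarrow> ys \<noteq> zs \<Longrightarrow> set ys \<inter> set zs = {}"
      using gset by auto
  qed
  have dB: "distinct xsB" unfolding xsB_def
  proof (rule distinct_concat)
    have "inj_on (g \<circ> Pair False) {a..<b}"
    proof (rule inj_onI)
      fix x y assume xy: "x \<in> {a..<b}" "y \<in> {a..<b}" "(g \<circ> Pair False) x = (g \<circ> Pair False) y"
      obtain v where v: "v \<in> B" "v div k = x" using ne[of x] xy(1) by auto
      then have "v \<in> set (g (False, x))" using gset by simp
      then have "v \<in> set (g (False, y))" using xy(3) by simp
      then show "x = y" using gset v by simp
    qed
    then show "distinct (map g (map (Pair False) (rev [a..<b])))" by (simp add: distinct_map)
  next
    show "\<And>ys. ys \<in> set (map g (map (Pair False) (rev [a..<b]))) \<Longrightarrow> distinct ys" using gdist by auto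
  next
    show "\<And>ys zs. ys \<in> set (map g (map (Pair False) (rev [a..<b]))) \<Longrightarrow> zs \<in> set (map g (map (Pair False) (rev [a..<b])))
            \<Longrightarrow> ys \<noteq> zs \<Longrightarrow> set ys \<inter> set zs = {}"
      using gset by auto
  qed
  have dxs: "distinct xs" unfolding xs_def using dA dB setA setB disj by simp
  have succ_ps: "successively (\<lambda>p q. snd p \<le> Suc (snd q) \<and> snd q \<le> Suc (snd p)) ps"
  proof -
    have "map snd ps = [a..<b] @ rev [a..<b]" unfolding ps_def by (simp add: comp_def map_idI)
    moreover have "successively (\<lambda>p q. p \<le> Suc q \<and> q \<le> Suc p) ([a..<b] @ rev [a..<b])"
    proof -
      have s1: "successively (\<lambda>p q. p \<le> Suc q \<and> q \<le> Suc p) [a..<b]" by (rule succ_upt)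
      have s2: "successively (\<lambda>p q. p \<le> Suc q \<and> q \<le> Suc p) (rev [a..<b])"
        using succ_upt[of a b] by (simp add: conj_commute)
      have "last [a..<b] = hd (rev [a..<b])" using ab by (simp add: hd_rev)
      then show ?thesis using s1 s2 by (auto simp: successively_append_iff)
    qed
    ultimately show ?thesis
      using successively_map[of "\<lambda>p q. p \<le> Suc q \<and> q \<le> Suc p" snd ps] by simp
  qed
  have sxs: "successively (near k) xs"
    unfolding xs_ps
    by (rule succ_concat[OF succ_ps]) (use gne gset in auto)
  have xsV: "set xs \<subseteq> GV k n" unfolding xs_def GV_def using setA setB A B bnd by auto
  have path: "is_path (GV k n) (GE k n) xs"
    unfolding is_path_def
  proof (intro conjI allI impI)
    have "xsA \<noteq> []" using setA ne[of a] ab by auto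
    then show "xs \<noteq> []" unfolding xs_def by simp
    show "distinct xs" by (rule dxs)
    show "set xs \<subseteq> GV k n" by (rule xsV)
    fix i assume i: "Suc i < length xs"
    have nr: "near k (xs ! i) (xs ! Suc i)" using successively_nth[OF sxs i] .
    have ne2: "xs ! i \<noteq> xs ! Suc i" using dxs i by (simp add: nth_eq_iff_index_eq)
    have "xs ! i \<in> set xs" "xs ! Suc i \<in> set xs" using i by auto
    then have "xs ! i < k*n" "xs ! Suc i < k*n" using xsV unfolding GV_def by auto
    then show "GE k n (xs ! i) (xs ! Suc i)" using nr ne2 unfolding GE_def near_def by simp
  qed
  have msA: "mset (map \<phi> xsA) = image_mset \<phi> (mset_set A)"
    using mset_set_set[OF dA] setA by simp
  have msB: "mset (map \<phi> xsB) = image_mset \<phi> (mset_set B)"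
    using mset_set_set[OF dB] setB by simp
  have cnt: "count (image_mset \<phi> (mset_set C)) x = card {v\<in>C. \<phi> v = x}" if "finite C" for C x
  proof -
    have "count (image_mset \<phi> (mset_set C)) x = (\<Sum>y\<in>\<phi> -` {x} \<inter> C. 1)"
      unfolding count_image_mset using that by simp
    also have "\<dots> = card {v\<in>C. \<phi> v = x}" by (simp add: Int_def conj_commute)
    finally show ?thesis .
  qed
  have meq: "image_mset \<phi> (mset_set A) = image_mset \<phi> (mset_set B)"
    by (rule multiset_eqI) (simp add: cnt finA finB bal)
  have len: "length xsA = length xsB"
    by (metis length_map meq msA msB size_mset)
  have tk: "take (length xs div 2) xs = xsA" "drop (length xs div 2) xs = xsB"
    unfolding xs_def using len by auto
  have "anagram (map \<phi> xs)"
    unfolding anagram_def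
  proof
    show "even (length (map \<phi> xs))" unfolding xs_def using len by simp
    have "take (length (map \<phi> xs) div 2) (map \<phi> xs) = map \<phi> xsA" using tk by (simp add: take_map)
    moreover have "drop (length (map \<phi> xs) div 2) (map \<phi> xs) = map \<phi> xsB" using tk by (simp add: drop_map)
    ultimately show "mset (take (length (map \<phi> xs) div 2) (map \<phi> xs)) = mset (drop (length (map \<phi> xs) div 2) (map \<phi> xs))"
      using msA msB meq by simp
  qed
  moreover have "even (length xs)" unfolding xs_def using len by simp
  moreover have "2 \<le> length xs"
  proof -
    have "xsA \<noteq> []" using setA ne[of a] ab by auto
    then show ?thesis unfolding xs_def using len by (cases xsA) auto
  qed
  ultimately show ?thesis using path by blast
qed


lemma le_div_imp: "m \<le> v div k \<Longrightarrow> m*k \<le> (v::nat)"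
  by (meson div_times_less_eq_dividend le_trans mult_le_mono1)

lemma div_lt_imp: "0 < k \<Longrightarrow> v div k < m \<Longrightarrow> (v::nat) < m*k"
  using div_less_iff_less_mult by blast

lemma col_iff: "0 < k \<Longrightarrow> v div k = m \<longleftrightarrow> m*k \<le> v \<and> v < m*k + (k::nat)"
proof
  assume k: "0 < k" and h: "v div k = m"
  have "m*k \<le> v" using le_div_imp[of m v k] h by simp
  moreover have "v < Suc m * k" using div_lt_imp[OF k, of v "Suc m"] h by simp
  ultimately show "m*k \<le> v \<and> v < m*k + k" by simp
next
  assume k: "0 < k" and h: "m*k \<le> v \<and> v < m*k + k"
  then show "v div k = m" using div_nat_eqI[of k m v] by (simp add: mult.commute)
qed

lemma col_eq: assumes "0 < k" shows "{v. v div k = m} = {m*k..<m*k+(k::nat)}"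
  by (auto simp: col_iff[OF assms])

lemma card_col: "0 < k \<Longrightarrow> card {v. v div k = m} = k"
  by (simp add: col_eq)

lemma lt_kn: "0 < k \<Longrightarrow> v < k*n \<longleftrightarrow> v div k < (n::nat)"
  using div_less_iff_less_mult[of k v n] by (simp add: mult.commute)

lemma G_sgraph: "sgraph (GV k n) (GE k n)"
  unfolding sgraph_def GV_def GE_def by auto

lemma G_card: "card (GV k n) = k*n"
  unfolding GV_def by simp

lemma G_degree: assumes k: "0 < k" shows "degree (GE k n) v \<le> 3*k - 1"
proof -
  define c where "c = v div k"
  have sub: "{u. GE k n v u} \<subseteq> {(c-1)*k..<(c+2)*k} - {v}"
  proof
    fix u assume "u \<in> {u. GE k n v u}"
    then have g: "GE k n v u" by simp
    have "u div k \<le> c + 1" using g unfolding GE_def c_def by simp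
    then have "u < (c+2)*k" using div_lt_imp[OF k, of u "c+2"] by simp
    moreover have "c - 1 \<le> u div k" using g unfolding GE_def c_def by arith
    then have "(c-1)*k \<le> u" by (rule le_div_imp)
    moreover have "u \<noteq> v" using g unfolding GE_def by simp
    ultimately show "u \<in> {(c-1)*k..<(c+2)*k} - {v}" by simp
  qed
  have vin: "v \<in> {(c-1)*k..<(c+2)*k}"
  proof -
    have "c*k \<le> v" "v < c*k + k" using col_iff[OF k, of v c] c_def by auto
    moreover have "(c-1)*k \<le> c*k" by (meson diff_le_self mult_le_mono1)
    moreover have "c*k + k \<le> (c+2)*k" by simp
    ultimately show ?thesis by (simp only: atLeastLessThan_iff) linarith
  qed
  have "card {u. GE k n v u} \<le> card ({(c-1)*k..<(c+2)*k} - {v})"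
    by (rule card_mono[OF _ sub]) simp
  also have "\<dots> = (c+2)*k - (c-1)*k - 1" using vin by simp
  also have "\<dots> \<le> 3*k - 1"
  proof -
    have "(c+2)*k - (c-1)*k \<le> 3*k"
    proof (cases c)
      case 0 then show ?thesis by simp
    next
      case (Suc d) then show ?thesis by (simp add: algebra_simps)
    qed
    then show ?thesis by simp
  qed
  finally show ?thesis unfolding degree_def .
qed

lemma G_maxdeg: "0 < k \<Longrightarrow> max_degree (GV k n) (GE k n) \<le> 3*k - 1"
  unfolding max_degree_def using G_degree by (simp add: GV_def)

lemma G_pw: assumes k: "0 < k" shows "pathwidth (GV k n) (GE k n) \<le> 2*k - 1"
proof -
  define Bs where "Bs = map (\<lambda>i. {v. v < k*n \<and> i \<le> v div k \<and> v div k \<le> Suc i}) [0..<n]"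
  have nth: "i < n \<Longrightarrow> Bs ! i = {v. v < k*n \<and> i \<le> v div k \<and> v div k \<le> Suc i}" for i
    unfolding Bs_def by simp
  have len: "length Bs = n" unfolding Bs_def by simp
  have pd: "path_decomposition (GV k n) (GE k n) Bs"
    unfolding path_decomposition_def
  proof (intro conjI allI ballI impI)
    fix B assume "B \<in> set Bs" then show "B \<subseteq> GV k n" unfolding Bs_def GV_def by auto
  next
    fix v assume v: "v \<in> GV k n"
    then have "v div k < n" using lt_kn[OF k] unfolding GV_def by simp
    then show "\<exists>B\<in>set Bs. v \<in> B" using v unfolding Bs_def GV_def by auto
  next
    fix u v assume e: "GE k n u v"
    define i where "i = min (u div k) (v div k)"
    have "u div k < n" using e lt_kn[OF k] unfolding GE_def by simp
    then have "i < n" unfolding i_def by simp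
    moreover have "u \<in> Bs ! i" "v \<in> Bs ! i"
    proof -
      have uv: "u < k*n" "v < k*n" "u div k \<le> Suc (v div k)" "v div k \<le> Suc (u div k)"
        using e unfolding GE_def by auto
      have "i \<le> u div k" "u div k \<le> Suc i" "i \<le> v div k" "v div k \<le> Suc i"
        unfolding i_def using uv(3,4) by (simp_all add: min_def)
      then show "u \<in> Bs ! i" "v \<in> Bs ! i" unfolding nth[OF \<open>i < n\<close>] using uv(1,2) by simp_all
    qed
    ultimately show "\<exists>B\<in>set Bs. u \<in> B \<and> v \<in> B"
      by (intro bexI[of _ "Bs ! i"]) (simp_all add: len)
  next
    fix v i j l assume h: "i \<le> j \<and> j \<le> l \<and> l < length Bs \<and> v \<in> Bs ! i \<and> v \<in> Bs ! l"
    have ijl: "i < n" "j < n" "l < n" using h len by auto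
    have v1: "v div k \<le> Suc i" using h nth[OF ijl(1)] by simp
    have v2: "l \<le> v div k" "v < k*n" using h nth[OF ijl(3)] by simp_all
    show "v \<in> Bs ! j" unfolding nth[OF ijl(2)] using v1 v2 h by simp
  qed
  have cb: "\<forall>B\<in>set Bs. card B \<le> 2*k - 1 + 1"
  proof
    fix B assume "B \<in> set Bs"
    then obtain i where i: "i < n" "B = {v. v < k*n \<and> i \<le> v div k \<and> v div k \<le> Suc i}" unfolding Bs_def by auto
    have "B \<subseteq> {i*k..<i*k + 2*k}"
    proof
      fix v assume "v \<in> B"
      then have "i \<le> v div k" "v div k \<le> Suc i" using i by auto
      then have "i*k \<le> v" "v < (i+2)*k" using le_div_imp[of i v k] div_lt_imp[OF k, of v "i+2"] by auto
      then have "i*k \<le> v" "v < i*k + 2*k" by (auto simp: algebra_simps)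
      then show "v \<in> {i*k..<i*k + 2*k}" by simp
    qed
    then have "card B \<le> 2*k" by (metis card_atLeastLessThan card_mono diff_add_inverse finite_atLeastLessThan)
    then show "card B \<le> 2*k - 1 + 1" using k by simp
  qed
  show ?thesis unfolding pathwidth_def by (rule Least_le) (use pd cb in blast)
qed

lemma afc_exists: "anagram_free_colouring (GV k n) (GE k n) Suc (k*n)"
  unfolding anagram_free_colouring_def
proof (intro conjI allI impI)
  show "Suc ` GV k n \<subseteq> {1..k*n}" unfolding GV_def by auto
  fix xs assume h: "is_path (GV k n) (GE k n) xs \<and> even (length xs) \<and> 2 \<le> length xs"
  define ys where "ys = map Suc xs"
  define hh where "hh = length ys div 2"
  have d: "distinct ys" using h unfolding is_path_def ys_def by (simp add: distinct_map)
  have "distinct (take hh ys @ drop hh ys)" using d by simp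
  then have disj: "set (take hh ys) \<inter> set (drop hh ys) = {}" by (simp only: distinct_append)
  have "hh \<ge> 1" "hh \<le> length ys" using h unfolding hh_def ys_def by auto
  moreover have "ys \<noteq> []" using h unfolding ys_def by auto
  ultimately have ne: "take hh ys \<noteq> []" by simp
  show "\<not> anagram (map Suc xs)"
  proof
    assume "anagram (map Suc xs)"
    then have "mset (take hh ys) = mset (drop hh ys)" unfolding anagram_def ys_def hh_def by simp
    then have "set (take hh ys) = set (drop hh ys)" by (metis set_mset_mset)
    then show False using disj ne by auto
  qed
qed

lemma afc_adj:
  assumes "anagram_free_colouring (GV k n) (GE k n) \<phi> c" "GE k n u v"
  shows "\<phi> u \<noteq> \<phi> v"
proof
  assume eq: "\<phi> u = \<phi> v"
  have "is_path (GV k n) (GE k n) [u, v]"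
    using assms(2) unfolding is_path_def GE_def GV_def by (auto simp: less_Suc_eq)
  moreover have "anagram (map \<phi> [u, v])" unfolding anagram_def using eq by simp
  ultimately show False using assms(1) unfolding anagram_free_colouring_def by fastforce
qed

lemma afc_col:
  assumes "0 < k" "anagram_free_colouring (GV k n) (GE k n) \<phi> c" "u div k = v div k" "v div k < n" "u \<noteq> v"
  shows "\<phi> u \<noteq> \<phi> v"
proof -
  have "u < k*n" "v < k*n" using assms(3,4) lt_kn[OF assms(1)] by auto
  then have "GE k n u v" using assms unfolding GE_def by simp
  then show ?thesis using afc_adj assms(2) by blast
qed

lemma inj_col:
  assumes "0 < k" "anagram_free_colouring (GV k n) (GE k n) \<phi> c" "m < n"
  shows "inj_on \<phi> {v. v div k = m}"
proof (rule inj_onI)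
  fix x y assume "x \<in> {v. v div k = m}" "y \<in> {v. v div k = m}" "\<phi> x = \<phi> y"
  then show "x = y" using afc_col[OF assms(1,2), of x y] assms(3) by auto
qed


lemma parity_card:
  assumes "finite S"
  shows "even (\<Sum>m\<in>S. f m) \<longleftrightarrow> even (card {m\<in>S. odd ((f m)::nat)})"
  using assms
proof (induction S rule: finite_induct)
  case empty then show ?case by simp
next
  case (insert x S)
  have c: "card {m\<in>insert x S. odd (f m)} = (if odd (f x) then Suc (card {m\<in>S. odd (f m)}) else card {m\<in>S. odd (f m)})"
  proof (cases "odd (f x)")
    case True
    then have "{m\<in>insert x S. odd (f m)} = insert x {m\<in>S. odd (f m)}" by auto
    then show ?thesis using True insert.hyps by simp
  next
    case False
    then have "{m\<in>insert x S. odd (f m)} = {m\<in>S. odd (f m)}" by auto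
    then show ?thesis using False by simp
  qed
  show ?case using insert.IH insert.hyps by (cases "odd (f x)") (simp_all only: c sum.insert, simp_all)
qed

lemma card_sum_labels:
  assumes "finite X" "finite Y"
  shows "card {i \<in> Inl ` X \<union> Inr ` Y. P i} = card {x\<in>X. P (Inl x)} + card {y\<in>Y. P (Inr y)}"
proof -
  have e: "{i \<in> Inl ` X \<union> Inr ` Y. P i} = Inl ` {x\<in>X. P (Inl x)} \<union> Inr ` {y\<in>Y. P (Inr y)}" by auto
  show ?thesis unfolding e by (subst card_Un_disjoint) (use assms in \<open>auto simp: card_image\<close>)
qed

lemma card_single_sel: "card {x\<in>S. P x \<and> x = m} = (if m \<in> S \<and> P m then 1 else 0)"
proof -
  have "{x\<in>S. P x \<and> x = m} = (if m \<in> S \<and> P m then {m} else {})" by auto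
  then show ?thesis by simp
qed

lemma card_single_sel': "card {x\<in>S. x = m} = (if m \<in> S then 1 else 0)"
  using card_single_sel[of S "\<lambda>_. True" m] by simp

lemma card_ge1_ex: assumes "1 \<le> card {v\<in>S. P v}" shows "\<exists>v\<in>S. P v"
proof (rule ccontr)
  assume "\<not> ?thesis"
  then have "{v\<in>S. P v} = {}" by auto
  then have "card {v\<in>S. P v} = 0" by (metis card.empty)
  then show False using assms by linarith
qed

locale kl =
  fixes k n :: nat and \<phi> :: "nat \<Rightarrow> nat" and c a b :: nat
  assumes k3: "3 \<le> k" and afc: "anagram_free_colouring (GV k n) (GE k n) \<phi> c"
    and ab: "a < b" "b \<le> n"
begin

definition J where "J = {v. a \<le> v div k \<and> v div k < b}"
definition col where "col m = {v. v div k = m}"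
definition U where "U m = {v \<in> col m. \<forall>u\<in>J. \<phi> u = \<phi> v \<longrightarrow> u = v}"

lemma k0: "0 < k" using k3 by simp

lemma J_sub: "J \<subseteq> {..<k*n}"
proof
  fix v assume "v \<in> J"
  then have "v div k < n" using ab unfolding J_def by auto
  then show "v \<in> {..<k*n}" using lt_kn[OF k0] by simp
qed

lemma finJ: "finite J" using J_sub finite_subset by blast

lemma colJ: "a \<le> m \<Longrightarrow> m < b \<Longrightarrow> col m \<subseteq> J" unfolding col_def J_def by auto

lemma fincol: "finite (col m)" unfolding col_def using col_eq[OF k0] by simp

lemma card_col': "card (col m) = k" unfolding col_def using card_col[OF k0] .

lemma same_col: "u div k = v div k \<Longrightarrow> v div k < n \<Longrightarrow> \<phi> u = \<phi> v \<Longrightarrow> u = v"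
  using afc_col[OF k0 afc] by blast

definition R where "R = {v\<in>J. \<exists>u\<in>J. u \<noteq> v \<and> \<phi> u = \<phi> v}"

lemma finR: "finite R" unfolding R_def using finJ by simp

lemma RJ: "R \<subseteq> J" unfolding R_def by auto

lemma R_col:
  assumes m: "a \<le> m" "m < b" and small: "card (U m) < k - 2"
  shows "3 \<le> card (R \<inter> col m)"
proof -
  have "col m = U m \<union> (R \<inter> col m)"
    using colJ[OF m] unfolding U_def R_def by auto
  moreover have "U m \<inter> (R \<inter> col m) = {}" unfolding U_def R_def by auto
  ultimately have "card (col m) = card (U m) + card (R \<inter> col m)"
    using fincol by (metis card_Un_disjoint finite_Un)
  then show ?thesis using card_col' small k3 by simp
qed

definition cnt where "cnt x = card {v\<in>R. \<phi> v = x}"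

lemma cnt_ge2: assumes "v \<in> R" shows "2 \<le> cnt (\<phi> v)"
proof -
  obtain u where u: "u \<in> J" "u \<noteq> v" "\<phi> u = \<phi> v" using assms unfolding R_def by auto
  have "u \<in> R" using u assms unfolding R_def by auto
  then have "{u, v} \<subseteq> {w\<in>R. \<phi> w = \<phi> v}" using u assms by auto
  then have "card {u, v} \<le> cnt (\<phi> v)" unfolding cnt_def by (rule card_mono[rotated]) (simp add: finR)
  then show ?thesis using u by simp
qed

definition Od where "Od = {x \<in> \<phi> ` R. odd (cnt x)}"

lemma finO: "finite Od" unfolding Od_def using finR by simp

lemma cnt_ge3: assumes "x \<in> Od" shows "3 \<le> cnt x"
proof -
  obtain v where "v \<in> R" "\<phi> v = x" using assms unfolding Od_def by auto
  then have "2 \<le> cnt x" using cnt_ge2 by blast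
  moreover have "odd (cnt x)" using assms unfolding Od_def by simp
  ultimately show ?thesis by (cases "cnt x = 2") auto
qed

definition cap where "cap m = card (R \<inter> col m) - 2"
definition Mx where "Mx x = {m. a \<le> m \<and> m < b \<and> (\<exists>v\<in>R \<inter> col m. \<phi> v = x)}"
definition Aset where "Aset x = Sigma (Mx x) (\<lambda>m. {..<cap m})"

lemma hall_cond:
  assumes small: "\<And>m. a \<le> m \<Longrightarrow> m < b \<Longrightarrow> card (U m) < k - 2"
    and K: "K \<subseteq> Od"
  shows "card K \<le> card (\<Union>(Aset ` K))"
proof -
  define MK where "MK = {m. a \<le> m \<and> m < b \<and> (\<exists>v\<in>R \<inter> col m. \<phi> v \<in> K)}"
  have finMK: "finite MK" unfolding MK_def by (rule finite_subset[of _ "{a..<b}"]) auto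
  have finK: "finite K" using K finO finite_subset by blast
  have un: "\<Union>(Aset ` K) = Sigma MK (\<lambda>m. {..<cap m})"
    unfolding Aset_def MK_def Mx_def by blast
  have c1: "card (\<Union>(Aset ` K)) = (\<Sum>m\<in>MK. cap m)" unfolding un using finMK by simp
  define RK where "RK = {v\<in>R. \<phi> v \<in> K}"
  have finRK: "finite RK" unfolding RK_def using finR by simp
  have RK1: "RK = (\<Union>m\<in>MK. RK \<inter> col m)"
  proof
    show "RK \<subseteq> (\<Union>m\<in>MK. RK \<inter> col m)"
    proof
      fix v assume v: "v \<in> RK"
      then have "v \<in> J" using RJ unfolding RK_def by auto
      then have "a \<le> v div k" "v div k < b" unfolding J_def by auto
      moreover have "v \<in> R \<inter> col (v div k)" "\<phi> v \<in> K" using v unfolding RK_def col_def by auto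
      ultimately have "v div k \<in> MK" unfolding MK_def by blast
      then show "v \<in> (\<Union>m\<in>MK. RK \<inter> col m)" using v unfolding col_def by auto
    qed
  qed auto
  have c2: "card RK = (\<Sum>m\<in>MK. card (RK \<inter> col m))"
    by (subst RK1, rule card_UN_disjoint) (use finMK finRK in \<open>auto simp: col_def\<close>)
  have c3: "(\<Sum>m\<in>MK. card (RK \<inter> col m)) \<le> (\<Sum>m\<in>MK. 3 * cap m)"
  proof (rule sum_mono)
    fix m assume m: "m \<in> MK"
    then have "3 \<le> card (R \<inter> col m)" using R_col small unfolding MK_def by auto
    moreover have "card (RK \<inter> col m) \<le> card (R \<inter> col m)"
      by (rule card_mono) (use finR in \<open>auto simp: RK_def\<close>)
    ultimately show "card (RK \<inter> col m) \<le> 3 * cap m" unfolding cap_def by linarith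
  qed
  have RK2: "RK = (\<Union>x\<in>K. {v\<in>R. \<phi> v = x})" unfolding RK_def by auto
  have c4: "card RK = (\<Sum>x\<in>K. cnt x)"
    unfolding cnt_def by (subst RK2, rule card_UN_disjoint) (use finK finR in auto)
  have c5: "(\<Sum>x\<in>K. 3) \<le> (\<Sum>x\<in>K. cnt x)"
    by (rule sum_mono) (use cnt_ge3 K in auto)
  have "3 * card K \<le> 3 * (\<Sum>m\<in>MK. cap m)"
    using c2 c3 c4 c5 by (simp add: sum_distrib_left)
  then show ?thesis using c1 by simp
qed


lemma keyU: "\<exists>m. a \<le> m \<and> m < b \<and> k - 2 \<le> card (U m)"
proof (rule ccontr)
  assume "\<not> ?thesis"
  then have small: "\<And>m. a \<le> m \<Longrightarrow> m < b \<Longrightarrow> card (U m) < k - 2" by force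
  have finA: "\<And>x. x \<in> Od \<Longrightarrow> finite (Aset x)"
    unfolding Aset_def Mx_def by (rule finite_SigmaI) (rule finite_subset[of _ "{a..<b}"], auto)
  obtain f where f: "inj_on f Od" "\<forall>x\<in>Od. f x \<in> Aset x"
    using hall[OF finO finA hall_cond[OF small]] by blast
  have fM: "fst (f x) \<in> Mx x" "snd (f x) < cap (fst (f x))" if "x \<in> Od" for x
    using f(2) that unfolding Aset_def by auto
  define D where "D = {v\<in>R. \<phi> v \<in> Od \<and> fst (f (\<phi> v)) = v div k}"
  define W where "W = R - D"
  have WJ: "W \<subseteq> J" unfolding W_def using RJ by auto
  have finW: "finite W" unfolding W_def using finR by simp
  have DR: "D \<subseteq> R" unfolding D_def by auto
  have W_col: "2 \<le> card (W \<inter> col m)" if m: "a \<le> m" "m < b" for m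
  proof -
    have R3: "3 \<le> card (R \<inter> col m)" using R_col[OF m small[OF m]] .
    have "inj_on (\<lambda>v. snd (f (\<phi> v))) (D \<inter> col m)"
    proof (rule inj_onI)
      fix v w assume v: "v \<in> D \<inter> col m" and w: "w \<in> D \<inter> col m" and e: "snd (f (\<phi> v)) = snd (f (\<phi> w))"
      have fv: "fst (f (\<phi> v)) = m" "fst (f (\<phi> w)) = m" using v w unfolding D_def col_def by auto
      then have "f (\<phi> v) = f (\<phi> w)" using e by (simp add: prod_eq_iff)
      moreover have "\<phi> v \<in> Od" "\<phi> w \<in> Od" using v w unfolding D_def by auto
      ultimately have "\<phi> v = \<phi> w" using f(1) by (meson inj_onD)
      moreover have "v div k = w div k" "w div k < n" using v w m ab unfolding col_def by auto
      ultimately show "v = w" using same_col by blast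
    qed
    moreover have "(\<lambda>v. snd (f (\<phi> v))) ` (D \<inter> col m) \<subseteq> {..<cap m}"
    proof
      fix y assume "y \<in> (\<lambda>v. snd (f (\<phi> v))) ` (D \<inter> col m)"
      then obtain v where v: "v \<in> D \<inter> col m" "y = snd (f (\<phi> v))" by auto
      have "\<phi> v \<in> Od" "fst (f (\<phi> v)) = m" using v unfolding D_def col_def by auto
      then show "y \<in> {..<cap m}" using fM[of "\<phi> v"] v by auto
    qed
    ultimately have "card (D \<inter> col m) \<le> cap m"
      by (metis card_inj_on_le card_lessThan finite_lessThan)
    moreover have "W \<inter> col m = (R \<inter> col m) - (D \<inter> col m)" unfolding W_def by auto
    moreover have "card ((R \<inter> col m) - (D \<inter> col m)) = card (R \<inter> col m) - card (D \<inter> col m)"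
      by (rule card_Diff_subset) (use finR DR fincol in auto)
    ultimately show ?thesis using R3 unfolding cap_def by simp
  qed
  have W_even: "even (card {v\<in>W. \<phi> v = x})" for x
  proof (cases "x \<in> Od")
    case False
    then have "{v\<in>W. \<phi> v = x} = {v\<in>R. \<phi> v = x}" unfolding W_def D_def by auto
    moreover have "even (cnt x)"
    proof (cases "x \<in> \<phi> ` R")
      case True then show ?thesis using False unfolding Od_def by simp
    next
      case False2: False
      then have "{v\<in>R. \<phi> v = x} = {}" by auto
      then have "cnt x = 0" unfolding cnt_def by (metis card.empty)
      then show ?thesis by simp
    qed
    ultimately show ?thesis unfolding cnt_def by simp
  next
    case True
    obtain v0 where v0: "v0 \<in> R" "v0 div k = fst (f x)" "\<phi> v0 = x"
      using fM(1)[OF True] unfolding Mx_def col_def by auto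
    have v0D: "v0 \<in> D" using v0 True unfolding D_def by simp
    have uniq: "v = v0" if "v \<in> D" "\<phi> v = x" for v
    proof -
      have "v div k = v0 div k" using that v0 unfolding D_def by auto
      moreover have "v0 div k < n" using v0(1) RJ ab unfolding J_def by auto
      ultimately show ?thesis using same_col[of v v0] that(2) v0(3) by simp
    qed
    have "{v\<in>W. \<phi> v = x} = {v\<in>R. \<phi> v = x} - {v0}" unfolding W_def using uniq v0D by auto
    then have "card {v\<in>W. \<phi> v = x} = cnt x - 1" unfolding cnt_def using v0 finR by simp
    moreover have "odd (cnt x)" "3 \<le> cnt x" using True cnt_ge3 unfolding Od_def by auto
    ultimately show ?thesis by simp
  qed
  define OC where "OC = {m \<in> {a..<b}. odd (card (W \<inter> col m))}"
  have finOC: "finite OC" unfolding OC_def by simp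
  define I where "I = (Inl ` W \<union> Inr ` OC :: (nat + nat) set)"
  define s :: "nat + nat \<Rightarrow> (nat + nat) option" where
    "s = case_sum (\<lambda>w. Some (Inl (w div k))) (\<lambda>m. Some (Inl m))"
  define t :: "nat + nat \<Rightarrow> (nat + nat) option" where
    "t = case_sum (\<lambda>w. Some (Inr (\<phi> w))) (\<lambda>m. None)"
  have finI: "finite I" unfolding I_def using finW finOC by simp
  have cI: "card {i\<in>I. P i} = card {w\<in>W. P (Inl w)} + card {m\<in>OC. P (Inr m)}" for P
    unfolding I_def by (rule card_sum_labels[OF finW finOC])
  have Wsplit: "W = (\<Union>m\<in>{a..<b}. W \<inter> col m)" using WJ unfolding J_def col_def by auto
  have cardW: "card W = (\<Sum>m\<in>{a..<b}. card (W \<inter> col m))"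
    by (subst Wsplit, rule card_UN_disjoint) (use finW in \<open>auto simp: col_def\<close>)
  have Wsplit2: "W = (\<Union>x\<in>\<phi> ` W. {v\<in>W. \<phi> v = x})" by auto
  have cardW2: "card W = (\<Sum>x\<in>\<phi> ` W. card {v\<in>W. \<phi> v = x})"
    by (subst Wsplit2, rule card_UN_disjoint) (use finW in auto)
  have evW: "even (card W)" unfolding cardW2 by (rule dvd_sum) (use W_even in auto)
  have evOC: "even (card OC)"
  proof -
    have "even (card {m\<in>{a..<b}. odd (card (W \<inter> col m))})"
      using parity_card[of "{a..<b}" "\<lambda>m. card (W \<inter> col m)"] evW cardW by simp
    then show ?thesis unfolding OC_def .
  qed
  have ev: "even (card {i\<in>I. s i = z} + card {i\<in>I. t i = z})" for z
  proof (cases z)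
    case None
    have "card {i\<in>I. s i = z} = 0" unfolding cI s_def None by simp
    moreover have "card {i\<in>I. t i = z} = card OC" unfolding cI t_def None by simp
    ultimately show ?thesis using evOC by simp
  next
    case (Some y)
    show ?thesis
    proof (cases y)
      case (Inl m)
      have t0: "card {i\<in>I. t i = z} = 0" unfolding cI t_def Some Inl by simp
      have s1: "card {i\<in>I. s i = z} = card (W \<inter> col m) + card {m'\<in>OC. m' = m}"
        unfolding cI s_def Some Inl by (simp add: col_def Int_def conj_commute)
      show ?thesis
      proof (cases "a \<le> m \<and> m < b")
        case True
        have "card {m'\<in>OC. m' = m} = (if odd (card (W \<inter> col m)) then 1 else 0)"
          unfolding card_single_sel' OC_def using True by auto
        then show ?thesis using t0 s1 by simp
      next
        case False
        then have "W \<inter> col m = {}" using WJ unfolding J_def col_def by auto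
        moreover have c0: "card {m'\<in>OC. m' = m} = 0" unfolding card_single_sel' OC_def using False by auto
        ultimately have "card {i\<in>I. s i = z} = 0" using s1 by (simp only: card.empty add_0)
        then show ?thesis using t0 by simp
      qed
    next
      case (Inr x)
      have s0: "card {i\<in>I. s i = z} = 0" unfolding cI s_def Some Inr by simp
      have t1: "card {i\<in>I. t i = z} = card {v\<in>W. \<phi> v = x}" unfolding cI t_def Some Inr by simp
      show ?thesis using s0 t1 W_even by simp
    qed
  qed
  obtain ori where ori: "\<forall>z. card {i\<in>I. otl ori s t i = z} = card {i\<in>I. ohd ori s t i = z}"
    using euler_orient[OF finI ev] by blast
  define A where "A = {w\<in>W. ori (Inl w)}"
  define B where "B = {w\<in>W. \<not> ori (Inl w)}"
  have bal: "card {v\<in>A. \<phi> v = x} = card {v\<in>B. \<phi> v = x}" for x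
  proof -
    have "card {i\<in>I. otl ori s t i = Some (Inr x)} = card {v\<in>B. \<phi> v = x}"
      unfolding cI otl_def s_def t_def B_def by (auto intro!: arg_cong[where f=card])
    moreover have "card {i\<in>I. ohd ori s t i = Some (Inr x)} = card {v\<in>A. \<phi> v = x}"
      unfolding cI ohd_def s_def t_def A_def by (auto intro!: arg_cong[where f=card])
    ultimately show ?thesis using ori[rule_format, of "Some (Inr x)"] by simp
  qed
  have ne: "(\<exists>v\<in>A. v div k = m) \<and> (\<exists>v\<in>B. v div k = m)" if m: "a \<le> m" "m < b" for m
  proof -
    define p where "p = card {v\<in>A. v div k = m}"
    define q where "q = card {v\<in>B. v div k = m}"
    have pq: "p + q = card (W \<inter> col m)"
    proof -
      have "W \<inter> col m = {v\<in>A. v div k = m} \<union> {v\<in>B. v div k = m}" unfolding A_def B_def col_def by auto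
      moreover have "card ({v\<in>A. v div k = m} \<union> {v\<in>B. v div k = m}) = p + q"
        unfolding p_def q_def by (rule card_Un_disjoint) (use finW in \<open>auto simp: A_def B_def\<close>)
      ultimately show ?thesis by simp
    qed
    have x1: "{w\<in>W. otl ori s t (Inl w) = Some (Inl m)} = {v\<in>A. v div k = m}"
      unfolding otl_def s_def t_def A_def by auto
    have x2: "{m'\<in>OC. otl ori s t (Inr m') = Some (Inl m)} = {m'\<in>OC. ori (Inr m') \<and> m' = m}"
      unfolding otl_def s_def t_def by auto
    have x3: "{w\<in>W. ohd ori s t (Inl w) = Some (Inl m)} = {v\<in>B. v div k = m}"
      unfolding ohd_def s_def t_def B_def by auto
    have x4: "{m'\<in>OC. ohd ori s t (Inr m') = Some (Inl m)} = {m'\<in>OC. \<not> ori (Inr m') \<and> m' = m}"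
      unfolding ohd_def s_def t_def by auto
    have e1: "card {i\<in>I. otl ori s t i = Some (Inl m)} = p + card {m'\<in>OC. ori (Inr m') \<and> m' = m}"
      unfolding cI x1 x2 p_def ..
    have e2: "card {i\<in>I. ohd ori s t i = Some (Inl m)} = q + card {m'\<in>OC. \<not> ori (Inr m') \<and> m' = m}"
      unfolding cI x3 x4 q_def ..
    have eq: "p + card {m'\<in>OC. ori (Inr m') \<and> m' = m} = q + card {m'\<in>OC. \<not> ori (Inr m') \<and> m' = m}"
      using ori[rule_format, of "Some (Inl m)"] e1 e2 by simp
    have W2: "2 \<le> p + q" using W_col[OF m] pq by simp
    show ?thesis
    proof (cases "m \<in> OC")
      case False
      then have "p = q" using eq unfolding card_single_sel by simp
      then have "1 \<le> p" "1 \<le> q" using W2 by auto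
      then show ?thesis unfolding p_def q_def
        using card_ge1_ex[of A "\<lambda>v. v div k = m"] card_ge1_ex[of B "\<lambda>v. v div k = m"] by blast
    next
      case True
      have od: "odd (p + q)" using True pq unfolding OC_def by simp
      have "p = q + 1 \<or> q = p + 1"
        using eq True unfolding card_single_sel by (cases "ori (Inr m)") auto
      then have "1 \<le> p" "1 \<le> q" using W2 od by auto
      then show ?thesis unfolding p_def q_def
        using card_ge1_ex[of A "\<lambda>v. v div k = m"] card_ge1_ex[of B "\<lambda>v. v div k = m"] by blast
    qed
  qed
  have AJ: "A \<subseteq> {v. a \<le> v div k \<and> v div k < b}" using WJ unfolding A_def J_def by auto
  have BJ: "B \<subseteq> {v. a \<le> v div k \<and> v div k < b}" using WJ unfolding B_def J_def by auto
  have disj: "A \<inter> B = {}" unfolding A_def B_def by auto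
  obtain xs where xs: "is_path (GV k n) (GE k n) xs" "even (length xs)" "2 \<le> length xs" "anagram (map \<phi> xs)"
    using anagram_from_AB[OF k0 ab AJ BJ disj ne bal] by blast
  then show False using afc unfolding anagram_free_colouring_def by blast
qed
end


lemma rec_bound:
  assumes k3: "3 \<le> k" and afc: "anagram_free_colouring (GV k n) (GE k n) \<phi> c"
  shows "a + L \<le> n \<Longrightarrow> 1 \<le> L \<Longrightarrow> 2^(h+1) \<le> L + 1 \<Longrightarrow>
         (k-2)*h + k \<le> card (\<phi> ` {v. a \<le> v div k \<and> v div k < a + L})"
proof (induction h arbitrary: a L)
  case 0
  have k0: "0 < k" using k3 by simp
  have sub: "{v. v div k = a} \<subseteq> {v. a \<le> v div k \<and> v div k < a + L}" using 0 by auto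
  have fin: "finite {v. a \<le> v div k \<and> v div k < a + L}"
  proof (rule finite_subset[of _ "{..<k*n}"])
    show "{v. a \<le> v div k \<and> v div k < a + L} \<subseteq> {..<k*n}" using 0 lt_kn[OF k0] by auto
  qed simp
  have "card (\<phi> ` {v. v div k = a}) = k"
    using card_image[OF inj_col[OF k0 afc, of a]] card_col[OF k0] 0 by simp
  moreover have "card (\<phi> ` {v. v div k = a}) \<le> card (\<phi> ` {v. a \<le> v div k \<and> v div k < a + L})"
    by (rule card_mono) (use fin sub in auto)
  ultimately show ?case by simp
next
  case (Suc h)
  have k0: "0 < k" using k3 by simp
  have ab: "a < a + L" "a + L \<le> n" using Suc.prems by auto
  interpret kl k n \<phi> c a "a + L" using k3 afc ab by unfold_locales
  obtain m where m: "a \<le> m" "m < a + L" "k - 2 \<le> card (U m)" using keyU by blast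
  have pw: "2 \<le> (2::nat)^(h+1)" by (metis Suc_1 Suc_eq_plus1 le_add2 one_le_numeral power_increasing power_one_right)
  have "\<exists>a' L'. a' + L' \<le> n \<and> 1 \<le> L' \<and> 2^(h+1) \<le> L' + 1 \<and>
          (\<forall>v. a' \<le> v div k \<and> v div k < a' + L' \<longrightarrow> a \<le> v div k \<and> v div k < a + L \<and> v div k \<noteq> m)"
  proof (cases "2^(h+1) \<le> (m - a) + 1")
    case True
    then have L1: "1 \<le> m - a" using pw by linarith
    have "a + (m - a) \<le> n \<and> 1 \<le> (m - a) \<and> 2^(h+1) \<le> (m - a) + 1 \<and>
          (\<forall>v. a \<le> v div k \<and> v div k < a + (m - a) \<longrightarrow> a \<le> v div k \<and> v div k < a + L \<and> v div k \<noteq> m)"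
      using m ab True L1 by auto
    then show ?thesis by blast
  next
    case False
    have "2 * 2^(h+1) \<le> L + 1" using Suc.prems(3) by simp
    then have T2: "2^(h+1) \<le> (a + L - Suc m) + 1" using False m by linarith
    then have L2: "1 \<le> a + L - Suc m" using pw by linarith
    have "Suc m + (a + L - Suc m) \<le> n \<and> 1 \<le> (a + L - Suc m) \<and> 2^(h+1) \<le> (a + L - Suc m) + 1 \<and>
          (\<forall>v. Suc m \<le> v div k \<and> v div k < Suc m + (a + L - Suc m) \<longrightarrow> a \<le> v div k \<and> v div k < a + L \<and> v div k \<noteq> m)"
      using m ab T2 L2 by auto
    then show ?thesis by blast
  qed
  then obtain a' L' where s: "a' + L' \<le> n" "1 \<le> L'" "2^(h+1) \<le> L' + 1"
      "\<And>v. a' \<le> v div k \<Longrightarrow> v div k < a' + L' \<Longrightarrow> a \<le> v div k \<and> v div k < a + L \<and> v div k \<noteq> m"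
    by blast
  define S where "S = {v. a' \<le> v div k \<and> v div k < a' + L'}"
  have IH: "(k-2)*h + k \<le> card (\<phi> ` S)" unfolding S_def using Suc.IH[OF s(1-3)] .
  have SJ: "S \<subseteq> J" unfolding S_def J_def using s(4) by auto
  have UJ: "U m \<subseteq> J" using colJ[OF m(1,2)] unfolding U_def by auto
  have dis: "\<phi> ` S \<inter> \<phi> ` U m = {}"
  proof (rule ccontr)
    assume "\<not> ?thesis"
    then obtain u v where uv: "u \<in> S" "v \<in> U m" "\<phi> u = \<phi> v" by auto
    then have "u = v" using SJ unfolding U_def by auto
    moreover have "u div k \<noteq> m" using uv(1) s(4) unfolding S_def by auto
    moreover have "v div k = m" using uv(2) unfolding U_def col_def by auto
    ultimately show False by simp
  qed
  have injU: "inj_on \<phi> (U m)"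
    using inj_col[OF k0 afc, of m] m ab unfolding U_def col_def by (auto intro: inj_on_subset)
  have finJ': "finite J" by (rule finJ)
  have "card (\<phi> ` S) + card (\<phi> ` U m) = card (\<phi> ` S \<union> \<phi> ` U m)"
  proof (rule card_Un_disjoint[symmetric])
    show "finite (\<phi> ` S)" using finJ' SJ by (meson finite_imageI finite_subset)
    show "finite (\<phi> ` U m)" using finJ' UJ by (meson finite_imageI finite_subset)
  qed (use dis in auto)
  also have "\<dots> \<le> card (\<phi> ` J)"
    by (rule card_mono) (use finJ' SJ UJ in auto)
  finally have "card (\<phi> ` S) + card (U m) \<le> card (\<phi> ` J)" using card_image[OF injU] by simp
  then show ?case using IH m(3) unfolding J_def by (simp add: algebra_simps)
qed

lemma lower_bound:
  assumes k3: "3 \<le> k" and afc: "anagram_free_colouring (GV k n) (GE k n) \<phi> c" and n1: "1 \<le> n"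
  shows "(real k - 2) * log 2 (real n / 3) \<le> real c"
proof -
  have k0: "0 < k" using k3 by simp
  have Vset: "GV k n = {v. 0 \<le> v div k \<and> v div k < 0 + n}" unfolding GV_def using lt_kn[OF k0] by auto
  have "\<phi> ` GV k n \<subseteq> {1..c}" using afc unfolding anagram_free_colouring_def by simp
  then have cc: "card (\<phi> ` GV k n) \<le> c" using card_mono[of "{1..c}"] by fastforce
  obtain e where e: "2^e \<le> n + 1" "n + 1 < 2^(e+1)" using ex_power_ivl1[of 2 "n+1"] by auto
  have "e \<noteq> 0" using e n1 by (cases e) auto
  then obtain h where h: "e = h + 1" by (metis Suc_eq_plus1 not0_implies_Suc)
  have rb: "(k-2)*h + k \<le> card (\<phi> ` GV k n)"
    unfolding Vset using rec_bound[OF k3 afc, of 0 n h] e h n1 by simp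
  have cb: "real ((k-2)*h + k) \<le> real c" using rb cc by linarith
  have nlt: "real n < 2^(h+2)" using e h by (metis add_2_eq_Suc' add_Suc_right of_nat_less_numeral_power_cancel_iff Suc_eq_plus1 less_imp_le_nat less_le_trans lessI of_nat_less_iff)
  have n3: "real n / 3 < 2 powr real (h+1)"
  proof -
    have "(2::real)^(h+2) = 2 * 2^(h+1)" by simp
    then have "real n < 3 * 2^(h+1)" using nlt by (smt (verit) zero_le_power)
    moreover have p: "(2::real) powr real (h+1) = 2^(h+1)" by (rule powr_realpow) simp
    ultimately show ?thesis unfolding p by simp
  qed
  have lg: "log 2 (real n / 3) < real (h+1)"
    using n3 log_less_iff[of 2 "real n / 3" "real (h+1)"] n1 by simp
  have kk: "0 \<le> real k - 2" using k3 by simp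
  have "(real k - 2) * log 2 (real n / 3) \<le> (real k - 2) * real (h+1)"
    using mult_left_mono[OF less_imp_le[OF lg] kk] .
  also have "\<dots> \<le> real ((k-2)*h + k)"
  proof -
    have "real ((k-2)*h + k) = (real k - 2) * real h + real k" using k3 by (simp add: of_nat_diff)
    then show ?thesis by (simp add: algebra_simps)
  qed
  finally show ?thesis using cb by linarith
qed

theorem theorem2:
  fixes n k :: nat
  assumes "n \<ge> 1" and "k \<ge> 3"
  shows "\<exists>(V :: nat set) E. sgraph V E \<and> card V = k * n \<and>
           pathwidth V E \<le> 2 * k - 1 \<and> max_degree V E \<le> 3 * k - 1 \<and>
           real (anagram_chromatic_number V E) \<ge> (real k - 2) * log 2 (real n / 3)"
proof -
  have k0: "0 < k" using assms by simp
  have ex: "\<exists>\<phi>. anagram_free_colouring (GV k n) (GE k n) \<phi> (anagram_chromatic_number (GV k n) (GE k n))"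
    unfolding anagram_chromatic_number_def by (rule LeastI_ex) (use afc_exists in blast)
  then obtain \<phi> where afc: "anagram_free_colouring (GV k n) (GE k n) \<phi> (anagram_chromatic_number (GV k n) (GE k n))"
    by blast
  have lb: "(real k - 2) * log 2 (real n / 3) \<le> real (anagram_chromatic_number (GV k n) (GE k n))"
    using lower_bound[OF assms(2) afc assms(1)] .
  show ?thesis
    using G_sgraph[of k n] G_card[of k n] G_pw[OF k0, of n] G_maxdeg[OF k0, of n] lb by blast
qed

end
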